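(* Assume (W1)–(W4) hold with an integer $M\ge1$ and $\alpha>1$. Then there exists an integer $j_0\ge0$ such that for all $j\ge j_0$ the trigonometric polynomial $H_j$ is not identically zero.
   Context: Fourier transform: $\hat g(\xi)=\int g(t)e^{-i\xi t}dt$. Conditions on $\phi,\psi\in L^2(\mathbb R)$: (W1) compactly supported, integrable, $\hat\phi(0)=1$, $\int\psi^2=1$; (W2) $\sup_\xi|\hat\psi(\xi)|(1+|\xi|)^\alpha<\infty$; (W3) $\int t^m\psi=0$ for $m<M$; (W4) for $m<M$, $t\mapsto\sum_kk^m\phi(t-k)$ is a polynomial of degree $m$. $h_{j,l}=2^{-j/2}\int\phi(t+l)\psi(2^{-j}t)dt$, $H_j(\lambda)=\sum_lh_{j,l}e^{-i\lambda l}$. *)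

theory Defs
  imports "HOL-Analysis.Analysis" "HOL-Computational_Algebra.Polynomial"
begin

definition fourier :: "(real \<Rightarrow> real) \<Rightarrow> real \<Rightarrow> complex" where
  "fourier g \<xi> = (LINT t|lborel. complex_of_real (g t) * exp (- (\<i> * complex_of_real (\<xi> * t))))"

definition L2 :: "(real \<Rightarrow> real) \<Rightarrow> bool" where
  "L2 g \<longleftrightarrow> g \<in> borel_measurable lborel \<and> integrable lborel (\<lambda>t. (g t)\<^sup>2)"

definition compactly_supported :: "(real \<Rightarrow> real) \<Rightarrow> bool" where
  "compactly_supported g \<longleftrightarrow> compact (closure {t. g t \<noteq> 0})"

definition hcoef :: "(real \<Rightarrow> real) \<Rightarrow> (real \<Rightarrow> real) \<Rightarrow> nat \<Rightarrow> int \<Rightarrow> real" where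
  "hcoef \<phi> \<psi> j l = 2 powr (- real j / 2) *
     (LINT t|lborel. \<phi> (t + real_of_int l) * \<psi> (2 powr (- real j) * t))"

definition Hpoly :: "(real \<Rightarrow> real) \<Rightarrow> (real \<Rightarrow> real) \<Rightarrow> nat \<Rightarrow> real \<Rightarrow> complex" where
  "Hpoly \<phi> \<psi> j lam = (\<Sum>\<^sub>\<infinity>l\<in>(UNIV::int set).
      complex_of_real (hcoef \<phi> \<psi> j l) * exp (- (\<i> * complex_of_real (lam * real_of_int l))))"

end

theory Submission
  imports Defs
begin
lemma supp_bound:
  assumes "compactly_supported g"
  shows "\<exists>R::nat. \<forall>t. g t \<noteq> 0 \<longrightarrow> \<bar>t\<bar> \<le> real R"
proof -
  have "bounded (closure {t. g t \<noteq> 0})" using assms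
    unfolding compactly_supported_def by (rule compact_imp_bounded)
  then have "bounded {t. g t \<noteq> 0}" by (rule bounded_subset) (rule closure_subset)
  then obtain B where B: "\<And>x. x\<in>{t. g t \<noteq> 0} \<Longrightarrow> norm x \<le> B" unfolding bounded_iff by blast
  obtain R::nat where R: "B \<le> real R" using real_arch_simple by blast
  have "\<bar>t\<bar> \<le> real R" if "g t \<noteq> 0" for t
    using B[of t] that R by simp
  then show ?thesis by blast
qed

lemma infsum_fin:
  fixes f :: "int \<Rightarrow> 'a::{comm_monoid_add,t2_space}"
  assumes "finite F" "\<And>k. k \<notin> F \<Longrightarrow> f k = 0"
  shows "infsum f UNIV = sum f F"
proof -
  have "infsum f UNIV = infsum f F"
    by (rule infsum_cong_neutral) (use assms in auto)
  then show ?thesis using assms by simp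
qed

lemma trig_int:
  fixes n :: int
  shows "((\<lambda>x::real. exp (\<i> * of_int n * of_real x)) has_integral (if n = 0 then of_real (2*pi) else 0)) {0..2*pi}"
proof (cases "n = 0")
  case True
  have "((\<lambda>x::real. (1::complex)) has_integral of_real (2*pi)) {0..2*pi}"
    using has_integral_const_real[of "1::complex" 0 "2*pi"] by (simp add: scaleR_conv_of_real)
  then show ?thesis using True by simp
next
  case False
  define G where "G z = exp (\<i> * of_int n * z) / (\<i> * of_int n)" for z :: complex
  have d: "(G has_field_derivative exp (\<i> * of_int n * z)) (at z)" for z
    unfolding G_def using False
    by (auto intro!: derivative_eq_intros simp: field_simps)
  have "((\<lambda>x::real. exp (\<i> * of_int n * of_real x)) has_integral (G (of_real (2*pi)) - G (of_real 0))) {0..2*pi}"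
    by (rule fundamental_theorem_of_calculus) (auto intro!: has_vector_derivative_real_field d)
  moreover have "exp (\<i> * of_int n * of_real (2*pi)) = 1"
  proof -
    have "\<i> * of_int n * of_real (2*pi) = (2 * complex_of_int n * of_real pi) * \<i>"
      by (simp add: algebra_simps)
    also have "exp \<dots> = 1" by (rule exp_integer_2pi[of "of_int n", simplified])
    finally show ?thesis by simp
  qed
  ultimately show ?thesis using False unfolding G_def by simp
qed

lemma pu_const:
  fixes \<phi> :: "real \<Rightarrow> real"
  assumes "\<exists>p :: real poly. degree p = 0 \<and>
     (\<forall>t. (\<Sum>\<^sub>\<infinity>k\<in>(UNIV::int set). real_of_int k ^ 0 * \<phi> (t - real_of_int k)) = poly p t)"
  shows "\<exists>c. \<forall>t. (\<Sum>\<^sub>\<infinity>k\<in>(UNIV::int set). \<phi> (t - real_of_int k)) = c"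
proof -
  obtain p :: "real poly" where p: "degree p = 0"
    "\<And>t. (\<Sum>\<^sub>\<infinity>k\<in>(UNIV::int set). real_of_int k ^ 0 * \<phi> (t - real_of_int k)) = poly p t"
    using assms by blast
  have "poly p t = coeff p 0" for t
    using degree_0_id[OF p(1)] by (metis poly_pCons mult_zero_right add.right_neutral poly_0)
  then show ?thesis using p(2) by auto
qed

lemma pu_sum:
  fixes \<phi> :: "real \<Rightarrow> real"
  assumes supp: "\<And>t. \<phi> t \<noteq> 0 \<Longrightarrow> \<bar>t\<bar> \<le> real R"
    and const: "\<And>t. (\<Sum>\<^sub>\<infinity>k\<in>(UNIV::int set). \<phi> (t - real_of_int k)) = c"
    and G: "finite G" "\<And>k. \<bar>t - real_of_int k\<bar> \<le> real R \<Longrightarrow> k \<in> G"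
  shows "(\<Sum>k\<in>G. \<phi> (t - real_of_int k)) = c"
proof -
  have "(\<Sum>\<^sub>\<infinity>k\<in>(UNIV::int set). \<phi> (t - real_of_int k)) = (\<Sum>k\<in>G. \<phi> (t - real_of_int k))"
  proof (rule infsum_fin[OF G(1)])
    fix k assume "k \<notin> G"
    then show "\<phi> (t - real_of_int k) = 0" using supp G(2) by blast
  qed
  then show ?thesis using const by simp
qed

lemma pu_one:
  fixes \<phi> :: "real \<Rightarrow> real"
  assumes meas: "\<phi> \<in> borel_measurable lborel" and int: "integrable lborel \<phi>"
    and one: "(LINT t|lborel. \<phi> t) = 1"
    and supp: "\<And>t. \<phi> t \<noteq> 0 \<Longrightarrow> \<bar>t\<bar> \<le> real R"
    and const: "\<And>t. (\<Sum>\<^sub>\<infinity>k\<in>(UNIV::int set). \<phi> (t - real_of_int k)) = c"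
  shows "c = 1"
proof -
  define K where "K = {-(int R + 1)..int R + 1}"
  have finK: "finite K" unfolding K_def by simp
  have ind: "indicator {- real_of_int k..<1 - real_of_int k} t = (if k = - \<lfloor>t\<rfloor> then 1 else (0::real))" for k t
  proof -
    have "t \<in> {- real_of_int k..<1 - real_of_int k} \<longleftrightarrow> \<lfloor>t\<rfloor> = - k"
      by (simp add: floor_eq_iff)
    then show ?thesis by (auto simp: indicator_def)
  qed
  have a: "\<phi> t = (\<Sum>k\<in>K. \<phi> t * indicator {- real_of_int k..<1 - real_of_int k} t)" for t
  proof (cases "\<phi> t = 0")
    case True then show ?thesis by simp
  next
    case False
    then have "\<bar>t\<bar> \<le> real R" using supp by blast
    then have t1: "\<lfloor>t\<rfloor> \<le> int R + 1" "- int R - 1 \<le> \<lfloor>t\<rfloor>"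
      by (auto simp: floor_le_iff le_floor_iff)
    then have "- \<lfloor>t\<rfloor> \<in> K" unfolding K_def by auto
    have "(\<Sum>k\<in>K. \<phi> t * indicator {- real_of_int k..<1 - real_of_int k} t)
        = (\<Sum>k\<in>K. if k = - \<lfloor>t\<rfloor> then \<phi> t else 0)"
      by (rule sum.cong) (auto simp: ind)
    also have "\<dots> = \<phi> t" using \<open>- \<lfloor>t\<rfloor> \<in> K\<close> finK by (simp add: sum.delta)
    finally show ?thesis by simp
  qed
  have intk: "integrable lborel (\<lambda>t. \<phi> t * indicator {- real_of_int k..<1 - real_of_int k} t)" for k
    by (rule integrable_real_mult_indicator) (auto intro: int)
  have intk2: "integrable lborel (\<lambda>x. \<phi> (x - real_of_int k) * indicator {0..<1} x)" for k
  proof -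
    have "integrable lborel (\<lambda>x. \<phi> (- real_of_int k + 1 * x))"
      by (rule lborel_integrable_real_affine[OF int]) simp
    then have "integrable lborel (\<lambda>x. \<phi> (x - real_of_int k))" by simp
    then show ?thesis by (rule integrable_real_mult_indicator[rotated]) simp
  qed
  have "1 = (LINT t|lborel. \<phi> t)" using one by simp
  also have "\<dots> = (LINT t|lborel. (\<Sum>k\<in>K. \<phi> t * indicator {- real_of_int k..<1 - real_of_int k} t))"
    using a by simp
  also have "\<dots> = (\<Sum>k\<in>K. LINT t|lborel. \<phi> t * indicator {- real_of_int k..<1 - real_of_int k} t)"
    using intk by simp
  also have "\<dots> = (\<Sum>k\<in>K. LINT x|lborel. \<phi> (x - real_of_int k) * indicator {0..<1} x)"
  proof (rule sum.cong[OF refl])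
    fix k
    have "(LINT t|lborel. \<phi> t * indicator {- real_of_int k..<1 - real_of_int k} t)
        = \<bar>1\<bar> *\<^sub>R (LINT x|lborel. \<phi> (- real_of_int k + 1 * x) * indicator {- real_of_int k..<1 - real_of_int k} (- real_of_int k + 1 * x))"
      by (rule lborel_integral_real_affine) simp
    also have "\<dots> = (LINT x|lborel. \<phi> (x - real_of_int k) * indicator {0..<1} x)"
    proof -
      have eq: "\<And>x. \<phi> (- real_of_int k + 1 * x) * indicator {- real_of_int k..<1 - real_of_int k} (- real_of_int k + 1 * x)
          = \<phi> (x - real_of_int k) * indicator {0..<1} x"
        by (auto simp: indicator_def)
      show ?thesis by (simp only: eq abs_one scaleR_one)
    qed
    finally show "(LINT t|lborel. \<phi> t * indicator {- real_of_int k..<1 - real_of_int k} t) = (LINT x|lborel. \<phi> (x - real_of_int k) * indicator {0..<1} x)" .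
  qed
  also have "\<dots> = (LINT x|lborel. (\<Sum>k\<in>K. \<phi> (x - real_of_int k) * indicator {0..<1} x))"
    using intk2 by simp
  also have "\<dots> = (LINT x|lborel. c * indicator {0..<1::real} x)"
  proof (intro Bochner_Integration.integral_cong refl)
    fix x
    show "(\<Sum>k\<in>K. \<phi> (x - real_of_int k) * indicator {0..<1} x) = c * indicator {0..<1} x"
    proof (cases "x \<in> {0..<1}")
      case True
      have "(\<Sum>k\<in>K. \<phi> (x - real_of_int k)) = c"
      proof (rule pu_sum[OF supp const finK])
        fix k assume "\<bar>x - real_of_int k\<bar> \<le> real R"
        then show "k \<in> K" using True unfolding K_def by auto
      qed
      then show ?thesis using True by (simp add: sum_distrib_right[symmetric])
    next
      case False then show ?thesis by simp
    qed
  qed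
  also have "\<dots> = c" by simp
  finally show ?thesis by simp
qed

lemma h_vanish_far:
  fixes \<phi> \<psi> :: "real \<Rightarrow> real"
  assumes suppphi: "\<And>t. \<phi> t \<noteq> 0 \<Longrightarrow> \<bar>t\<bar> \<le> real R"
    and supppsi: "\<And>t. \<psi> t \<noteq> 0 \<Longrightarrow> \<bar>t\<bar> \<le> real A"
    and N: "real R + 2 powr real j * real A \<le> real N"
    and l: "\<bar>l\<bar> > int N"
  shows "hcoef \<phi> \<psi> j l = 0"
proof -
  have "\<phi> (t + real_of_int l) * \<psi> (2 powr (- real j) * t) = 0" for t
  proof (rule ccontr)
    assume "\<phi> (t + real_of_int l) * \<psi> (2 powr (- real j) * t) \<noteq> 0"
    then have a: "\<bar>t + real_of_int l\<bar> \<le> real R" and b: "\<bar>2 powr (- real j) * t\<bar> \<le> real A"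
      using suppphi supppsi by auto
    have "\<bar>t\<bar> = 2 powr real j * \<bar>2 powr (- real j) * t\<bar>"
      by (simp add: abs_mult powr_minus field_simps)
    also have "\<dots> \<le> 2 powr real j * real A" using b by (intro mult_left_mono) auto
    finally have "\<bar>t\<bar> \<le> 2 powr real j * real A" .
    then have "\<bar>real_of_int l\<bar> \<le> real N" using a N by linarith
    then have "\<bar>l\<bar> \<le> int N" by linarith
    then show False using l by simp
  qed
  then have "(\<lambda>t. \<phi> (t + real_of_int l) * \<psi> (2 powr (- real j) * t)) = (\<lambda>t. 0)" by (rule ext)
  then show ?thesis unfolding hcoef_def by simp
qed

lemma H_zero_imp_h_zero:
  fixes \<phi> \<psi> :: "real \<Rightarrow> real"
  assumes suppphi: "\<And>t. \<phi> t \<noteq> 0 \<Longrightarrow> \<bar>t\<bar> \<le> real R"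
    and supppsi: "\<And>t. \<psi> t \<noteq> 0 \<Longrightarrow> \<bar>t\<bar> \<le> real A"
    and H0: "\<And>lam. Hpoly \<phi> \<psi> j lam = 0"
  shows "hcoef \<phi> \<psi> j m = 0"
proof -
  obtain N :: nat where N: "real R + 2 powr real j * real A \<le> real N"
    using real_arch_simple by blast
  define F where "F = {- int N..int N}"
  have finF: "finite F" unfolding F_def by simp
  have hz: "hcoef \<phi> \<psi> j l = 0" if "l \<notin> F" for l
    by (rule h_vanish_far[OF suppphi supppsi N]) (use that in \<open>auto simp: F_def\<close>)
  show ?thesis
  proof (cases "m \<in> F")
    case False then show ?thesis using hz by blast
  next
    case True
    define h where "h l = complex_of_real (hcoef \<phi> \<psi> j l)" for l
    have Hs: "Hpoly \<phi> \<psi> j lam = (\<Sum>l\<in>F. h l * exp (- (\<i> * complex_of_real (lam * real_of_int l))))" for lam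
      unfolding Hpoly_def h_def by (rule infsum_fin[OF finF]) (simp add: hz)
    define f where "f lam = (\<Sum>l\<in>F. h l * exp (\<i> * of_int (m - l) * of_real lam))" for lam :: real
    have f0: "f lam = 0" for lam
    proof -
      have "f lam = Hpoly \<phi> \<psi> j lam * exp (\<i> * of_int m * of_real lam)"
        unfolding Hs f_def sum_distrib_right
      proof (rule sum.cong[OF refl])
        fix l
        have "exp (\<i> * of_int (m - l) * of_real lam) = exp (- (\<i> * complex_of_real (lam * real_of_int l)) + \<i> * of_int m * of_real lam)"
          by (simp add: algebra_simps)
        also have "\<dots> = exp (- (\<i> * complex_of_real (lam * real_of_int l))) * exp (\<i> * of_int m * of_real lam)"
          by (rule exp_add)
        finally show "h l * exp (\<i> * of_int (m - l) * of_real lam) = h l * exp (- (\<i> * complex_of_real (lam * real_of_int l))) * exp (\<i> * of_int m * of_real lam)"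
          by simp
      qed
      then show ?thesis using H0 by simp
    qed
    have "(f has_integral (\<Sum>l\<in>F. h l * (if m - l = 0 then of_real (2*pi) else 0))) {0..2*pi}"
      unfolding f_def
      by (intro has_integral_sum finF has_integral_mult_right trig_int)
    moreover have "(\<Sum>l\<in>F. h l * (if m - l = 0 then of_real (2*pi) else 0)) = h m * of_real (2*pi)"
    proof -
      have "(\<Sum>l\<in>F. h l * (if m - l = 0 then of_real (2*pi) else 0)) = (\<Sum>l\<in>F. if l = m then h l * of_real (2*pi) else 0)"
        by (rule sum.cong) auto
      also have "\<dots> = h m * of_real (2*pi)" using True finF by (simp add: sum.delta')
      finally show ?thesis .
    qed
    moreover have "(f has_integral 0) {0..2*pi}"
    proof -
      have "f = (\<lambda>_. 0)" by (rule ext) (rule f0)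
      then show ?thesis by (simp add: has_integral_0)
    qed
    ultimately have "h m * of_real (2*pi) = 0" using has_integral_unique by metis
    then show ?thesis unfolding h_def by simp
  qed
qed

lemma amgm_pt:
  fixes a b t :: real
  assumes t: "t > 0"
  shows "\<bar>a * b\<bar> \<le> (t * a^2 + b^2 / t) / 2"
proof -
  have e: "(t*\<bar>a\<bar> - \<bar>b\<bar>)^2 = t^2*a^2 + b^2 - 2*(t*\<bar>a\<bar>)*\<bar>b\<bar>"
    by (simp add: power2_diff power_mult_distrib)
  have "0 \<le> (t*\<bar>a\<bar> - \<bar>b\<bar>)^2" by simp
  then have h: "2*t*(\<bar>a\<bar>*\<bar>b\<bar>) \<le> t^2*a^2 + b^2" using e by simp
  have "t * (t * a^2 + b^2 / t) = t^2*a^2 + b^2" using t by (simp add: field_simps power2_eq_square)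
  then have "t * (2 * \<bar>a * b\<bar>) \<le> t * (t * a^2 + b^2 / t)" using h by (simp add: abs_mult algebra_simps)
  then have "2 * \<bar>a * b\<bar> \<le> t * a^2 + b^2 / t" using t by simp
  then show ?thesis by simp
qed

lemma amgm_int:
  fixes f g :: "real \<Rightarrow> real"
  assumes fm: "f \<in> borel_measurable lborel" and gm: "g \<in> borel_measurable lborel"
    and f2: "integrable lborel (\<lambda>x. (f x)^2)" and g2: "integrable lborel (\<lambda>x. (g x)^2)"
    and t: "t > 0"
  shows "integrable lborel (\<lambda>x. f x * g x)"
    and "\<bar>LINT x|lborel. f x * g x\<bar> \<le> (t * (LINT x|lborel. (f x)^2) + (LINT x|lborel. (g x)^2) / t) / 2"
proof -
  have D: "integrable lborel (\<lambda>x. (t * (f x)^2 + (g x)^2 / t) / 2)"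
    using f2 g2 by simp
  have pt: "\<bar>f x * g x\<bar> \<le> (t * (f x)^2 + (g x)^2 / t) / 2" for x
    by (rule amgm_pt[OF t])
  show I: "integrable lborel (\<lambda>x. f x * g x)"
  proof (rule Bochner_Integration.integrable_bound[OF D])
    show "(\<lambda>x. f x * g x) \<in> borel_measurable lborel" using fm gm by measurable
    show "AE x in lborel. norm (f x * g x) \<le> norm ((t * (f x)^2 + (g x)^2 / t) / 2)"
    proof (rule AE_I2)
      fix x
      have "0 \<le> (t * (f x)^2 + (g x)^2 / t) / 2" using t by simp
      then show "norm (f x * g x) \<le> norm ((t * (f x)^2 + (g x)^2 / t) / 2)"
        using pt[of x] by simp
    qed
  qed
  have "\<bar>LINT x|lborel. f x * g x\<bar> \<le> (LINT x|lborel. (t * (f x)^2 + (g x)^2 / t) / 2)"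
    by (rule integral_abs_bound_integral[OF I D]) (rule pt)
  also have "\<dots> = (t * (LINT x|lborel. (f x)^2) + (LINT x|lborel. (g x)^2) / t) / 2"
    using f2 g2 by simp
  finally show "\<bar>LINT x|lborel. f x * g x\<bar> \<le> (t * (LINT x|lborel. (f x)^2) + (LINT x|lborel. (g x)^2) / t) / 2" .
qed

lemma dens_halfline:
  fixes f :: "real \<Rightarrow> real"
  assumes int: "integrable lborel f" and nn: "\<And>x. 0 \<le> f x"
  shows "emeasure (density lborel (\<lambda>x. ennreal (f x))) {a<..} = ennreal (LINT x|lborel. f x * indicator {a<..} x)"
proof -
  have fm: "f \<in> borel_measurable lborel" using int by (rule borel_measurable_integrable)
  have "emeasure (density lborel (\<lambda>x. ennreal (f x))) {a<..} = (\<integral>\<^sup>+ x. ennreal (f x) * indicator {a<..} x \<partial>lborel)"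
    by (rule emeasure_density) (use fm in auto)
  also have "\<dots> = (\<integral>\<^sup>+ x. ennreal (f x * indicator {a<..} x) \<partial>lborel)"
    by (intro nn_integral_cong) (auto simp: indicator_def)
  also have "\<dots> = ennreal (LINT x|lborel. f x * indicator {a<..} x)"
    by (rule nn_integral_eq_integral) (auto intro!: integrable_real_mult_indicator int simp: nn)
  finally show ?thesis .
qed

lemma zero_from_halflines:
  fixes \<psi> :: "real \<Rightarrow> real"
  assumes int: "integrable lborel \<psi>" and z: "\<And>a. (LINT s|lborel. \<psi> s * indicator {a<..} s) = 0"
  shows "AE x in lborel. \<psi> x = 0"
proof -
  define P where "P x = max 0 (\<psi> x)" for x
  define Q where "Q x = max 0 (- \<psi> x)" for x
  have iP: "integrable lborel P" unfolding P_def using int by auto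
  have iQ: "integrable lborel Q" unfolding Q_def using int by auto
  have nP: "0 \<le> P x" and nQ: "0 \<le> Q x" for x unfolding P_def Q_def by auto
  have iPa: "integrable lborel (\<lambda>x. P x * indicator {a<..} x)" for a
    by (rule integrable_real_mult_indicator) (auto intro: iP)
  have iQa: "integrable lborel (\<lambda>x. Q x * indicator {a<..} x)" for a
    by (rule integrable_real_mult_indicator) (auto intro: iQ)
  have PQ: "(LINT x|lborel. P x * indicator {a<..} x) = (LINT x|lborel. Q x * indicator {a<..} x)" for a
  proof -
    have "(LINT x|lborel. P x * indicator {a<..} x) - (LINT x|lborel. Q x * indicator {a<..} x)
        = (LINT x|lborel. P x * indicator {a<..} x - Q x * indicator {a<..} x)"
      using iPa iQa by simp
    also have "\<dots> = (LINT s|lborel. \<psi> s * indicator {a<..} s)"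
      by (intro Bochner_Integration.integral_cong refl) (auto simp: P_def Q_def indicator_def)
    also have "\<dots> = 0" by (rule z)
    finally show ?thesis by simp
  qed
  have eqM: "density lborel (\<lambda>x. ennreal (P x)) = density lborel (\<lambda>x. ennreal (Q x))"
  proof (rule measure_eqI_lessThan)
    show "sets (density lborel (\<lambda>x. ennreal (P x))) = sets borel" by simp
    show "sets (density lborel (\<lambda>x. ennreal (Q x))) = sets borel" by simp
    fix x
    show "emeasure (density lborel (\<lambda>x. ennreal (P x))) {x<..} < \<infinity>"
      using dens_halfline[OF iP nP] by simp
    show "emeasure (density lborel (\<lambda>x. ennreal (P x))) {x<..} = emeasure (density lborel (\<lambda>x. ennreal (Q x))) {x<..}"
      using dens_halfline[OF iP nP] dens_halfline[OF iQ nQ] PQ by simp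
  qed
  have "AE x in lborel. ennreal (P x) = ennreal (Q x)"
  proof (rule finite_density_unique[THEN iffD1, OF _ _ _ _ _ eqM])
    show "(\<lambda>x. ennreal (P x)) \<in> borel_measurable lborel" using iP by auto
    show "(\<lambda>x. ennreal (Q x)) \<in> borel_measurable lborel" using iQ by auto
    show "integral\<^sup>N lborel (\<lambda>x. ennreal (P x)) \<noteq> \<infinity>"
      using nn_integral_eq_integral[OF iP] nP by simp
  qed auto
  then show ?thesis
  proof (rule AE_mp)
    show "AE x in lborel. ennreal (P x) = ennreal (Q x) \<longrightarrow> \<psi> x = 0"
    proof (rule AE_I2, rule impI)
      fix x assume "ennreal (P x) = ennreal (Q x)"
      then have "P x = Q x" using nP nQ by (simp add: ennreal_inj)
      then show "\<psi> x = 0" unfolding P_def Q_def by linarith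
    qed
  qed
qed

lemma rescale:
  fixes \<phi> \<psi> :: "real \<Rightarrow> real"
  assumes "hcoef \<phi> \<psi> j (- k) = 0"
  shows "(LINT s|lborel. \<psi> s * \<phi> (2 powr real j * s - real_of_int k)) = 0"
proof -
  define J where "J = 2 powr real j"
  have J0: "J \<noteq> 0" unfolding J_def by simp
  have I0: "(LINT t|lborel. \<phi> (t + real_of_int (- k)) * \<psi> (2 powr (- real j) * t)) = 0"
    using assms unfolding hcoef_def by simp
  have eq: "\<phi> (0 + J * x + real_of_int (- k)) * \<psi> (2 powr (- real j) * (0 + J * x)) = \<psi> x * \<phi> (J * x - real_of_int k)" for x
  proof -
    have h: "2 powr (- real j) * (J * x) = x" unfolding J_def by (simp add: powr_minus field_simps)
    show ?thesis unfolding add_0_left h by (simp add: algebra_simps)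
  qed
  have "(LINT t|lborel. \<phi> (t + real_of_int (- k)) * \<psi> (2 powr (- real j) * t))
      = \<bar>J\<bar> *\<^sub>R (LINT x|lborel. \<phi> (0 + J * x + real_of_int (- k)) * \<psi> (2 powr (- real j) * (0 + J * x)))"
    by (rule lborel_integral_real_affine[OF J0])
  also have "\<dots> = \<bar>J\<bar> * (LINT x|lborel. \<psi> x * \<phi> (J * x - real_of_int k))"
    by (simp only: eq real_scaleR_def)
  finally show ?thesis using I0 J0 unfolding J_def by simp
qed

lemma sq_affine:
  fixes \<phi> :: "real \<Rightarrow> real"
  assumes J: "J > 0"
  shows "(LINT x|lborel. (\<phi> (J * x - real_of_int k))^2) = (LINT x|lborel. (\<phi> x)^2) / J"
    and "integrable lborel (\<lambda>x. (\<phi> x)^2) \<Longrightarrow> integrable lborel (\<lambda>x. (\<phi> (J * x - real_of_int k))^2)"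
proof -
  have J0: "J \<noteq> 0" using J by simp
  have eq: "(\<lambda>x. (\<phi> (- real_of_int k + J * x))^2) = (\<lambda>x. (\<phi> (J * x - real_of_int k))^2)"
    by (simp add: algebra_simps)
  have "(LINT x|lborel. (\<phi> x)^2) = \<bar>J\<bar> *\<^sub>R (LINT x|lborel. (\<phi> (- real_of_int k + J * x))^2)"
    by (rule lborel_integral_real_affine[OF J0])
  then show "(LINT x|lborel. (\<phi> (J * x - real_of_int k))^2) = (LINT x|lborel. (\<phi> x)^2) / J"
    using J by (simp add: eq)
  assume "integrable lborel (\<lambda>x. (\<phi> x)^2)"
  from lborel_integrable_real_affine[OF this J0, of "- real_of_int k"]
  show "integrable lborel (\<lambda>x. (\<phi> (J * x - real_of_int k))^2)" by (simp add: eq)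
qed

lemma N_sub:
  fixes x :: real and m :: nat
  shows "{k::int. \<bar>real_of_int k - x\<bar> \<le> real m} \<subseteq> {\<lceil>x\<rceil> - int m..\<lfloor>x\<rfloor> + int m}"
proof
  fix k assume "k \<in> {k::int. \<bar>real_of_int k - x\<bar> \<le> real m}"
  then have a: "x - real m \<le> real_of_int k" "real_of_int k \<le> x + real m" by auto
  have "\<lceil>x\<rceil> - int m \<le> k"
  proof -
    have "x \<le> real_of_int (k + int m)" using a by simp
    then have "\<lceil>x\<rceil> \<le> k + int m" by (simp add: ceiling_le_iff)
    then show ?thesis by simp
  qed
  moreover have "k \<le> \<lfloor>x\<rfloor> + int m"
  proof -
    have "real_of_int (k - int m) \<le> x" using a by simp
    then have "k - int m \<le> \<lfloor>x\<rfloor>" by (simp add: le_floor_iff)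
    then show ?thesis by simp
  qed
  ultimately show "k \<in> {\<lceil>x\<rceil> - int m..\<lfloor>x\<rfloor> + int m}" by simp
qed

lemma N_fin:
  fixes x :: real and m :: nat
  shows "finite {k::int. \<bar>real_of_int k - x\<bar> \<le> real m}"
  by (rule finite_subset[OF N_sub]) simp

lemma card_N_bound:
  fixes x :: real and m :: nat
  shows "card {k::int. \<bar>real_of_int k - x\<bar> \<le> real m} \<le> 2 * m + 1"
proof -
  note sub = N_sub[of x m]
  have "card {k::int. \<bar>real_of_int k - x\<bar> \<le> real m} \<le> card {\<lceil>x\<rceil> - int m..\<lfloor>x\<rfloor> + int m}"
    by (rule card_mono[OF _ sub]) simp
  also have "\<dots> = nat (\<lfloor>x\<rfloor> + int m - (\<lceil>x\<rceil> - int m) + 1)" by simp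
  also have "\<dots> \<le> 2 * m + 1"
  proof -
    have "\<lfloor>x\<rfloor> \<le> \<lceil>x\<rceil>" by (rule floor_le_ceiling)
    then have "\<lfloor>x\<rfloor> + int m - (\<lceil>x\<rceil> - int m) + 1 \<le> int (2 * m + 1)" by simp
    then show ?thesis by (simp only: nat_le_iff)
  qed
  finally show ?thesis .
qed

lemma main_est:
  fixes \<phi> \<psi> :: "real \<Rightarrow> real" and R A :: nat and J a :: real
  assumes phim: "\<phi> \<in> borel_measurable borel" and psim: "\<psi> \<in> borel_measurable borel"
    and psi2: "integrable lborel (\<lambda>x. (\<psi> x)^2)" and psi21: "(LINT x|lborel. (\<psi> x)^2) = 1"
    and phi2: "integrable lborel (\<lambda>x. (\<phi> x)^2)"
    and supppsi: "\<And>t. \<psi> t \<noteq> 0 \<Longrightarrow> \<bar>t\<bar> \<le> real A"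
    and suppphi: "\<And>t. \<phi> t \<noteq> 0 \<Longrightarrow> \<bar>t\<bar> \<le> real R"
    and PU: "\<And>t G. finite G \<Longrightarrow> (\<And>k. \<bar>t - real_of_int k\<bar> \<le> real R \<Longrightarrow> k \<in> G) \<Longrightarrow> (\<Sum>k\<in>G. \<phi> (t - real_of_int k)) = 1"
    and J: "J \<ge> 1"
    and orth: "\<And>k::int. (LINT s|lborel. \<psi> s * \<phi> (J * s - real_of_int k)) = 0"
  shows "\<bar>LINT s|lborel. \<psi> s * indicator {a<..} s\<bar>
     \<le> ((real R + 2) + (4 * real R + 3) * (1 + (LINT x|lborel. (\<phi> x)^2))) / (2 * sqrt J)"
proof -
  define \<Phi> where "\<Phi> = (LINT x|lborel. (\<phi> x)^2)"
  define \<delta> where "\<delta> = (real R + 1) / J"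
  define E where "E = {a - \<delta>..a + \<delta>}"
  define G where "G = {k::int. J * a < real_of_int k \<and> real_of_int k \<le> J * real A + real R + 1}"
  define N where "N = {k\<in>G. \<bar>real_of_int k - J * a\<bar> \<le> real (2 * R + 1)}"
  have Jpos: "J > 0" using J by simp
  have Jd: "J * \<delta> = real R + 1" unfolding \<delta>_def using Jpos by simp
  have dpos: "\<delta> > 0" unfolding \<delta>_def using Jpos by simp
  have finG: "finite G"
  proof (rule finite_subset)
    show "G \<subseteq> {\<lfloor>J * a\<rfloor>..\<lceil>J * real A + real R + 1\<rceil>}"
    proof
      fix k assume "k \<in> G"
      then have a: "J * a < real_of_int k" "real_of_int k \<le> J * real A + real R + 1" unfolding G_def by auto
      have "\<lfloor>J * a\<rfloor> \<le> k" using a(1) by (simp add: floor_le_iff)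
      moreover have "k \<le> \<lceil>J * real A + real R + 1\<rceil>" using ceiling_mono[OF a(2)] by simp
      ultimately show "k \<in> {\<lfloor>J * a\<rfloor>..\<lceil>J * real A + real R + 1\<rceil>}" by simp
    qed
  qed simp
  have NG: "N \<subseteq> G" unfolding N_def by auto
  have finN: "finite N" using finG NG finite_subset by blast
  have cardN: "card N \<le> 4 * R + 3"
  proof -
    have "N \<subseteq> {k::int. \<bar>real_of_int k - J * a\<bar> \<le> real (2 * R + 1)}" unfolding N_def by auto
    then have "card N \<le> card {k::int. \<bar>real_of_int k - J * a\<bar> \<le> real (2 * R + 1)}"
      by (rule card_mono[OF N_fin])
    also have "\<dots> \<le> 2 * (2 * R + 1) + 1" by (rule card_N_bound)
    finally show ?thesis by simp
  qed
  have ident: "\<psi> s * indicator {a<..} s =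
      (\<Sum>k\<in>G. \<psi> s * \<phi> (J * s - real_of_int k)) + \<psi> s * indicator {a<..a+\<delta>} s
      - (\<Sum>k\<in>N. (\<psi> s * indicator E s) * \<phi> (J * s - real_of_int k))" for s
  proof (cases "\<psi> s = 0")
    case True then show ?thesis by simp
  next
    case False
    then have sA: "\<bar>s\<bar> \<le> real A" using supppsi by blast
    show ?thesis
    proof (cases "s \<in> E")
      case True
      then have sE: "\<bar>s - a\<bar> \<le> \<delta>" unfolding E_def by auto
      have "(\<Sum>k\<in>G. \<phi> (J * s - real_of_int k)) = (\<Sum>k\<in>N. \<phi> (J * s - real_of_int k))"
      proof (rule sum.mono_neutral_right[OF finG NG])
        show "\<forall>k\<in>G - N. \<phi> (J * s - real_of_int k) = 0"
        proof
          fix k assume k: "k \<in> G - N"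
          then have far: "\<bar>real_of_int k - J * a\<bar> > real (2 * R + 1)" unfolding N_def by auto
          have "\<bar>J * s - J * a\<bar> = J * \<bar>s - a\<bar>" using Jpos by (simp add: abs_mult right_diff_distrib[symmetric])
          also have "\<dots> \<le> J * \<delta>" using sE Jpos by (intro mult_left_mono) auto
          finally have "\<bar>J * s - J * a\<bar> \<le> real R + 1" using Jd by simp
          then have "\<bar>J * s - real_of_int k\<bar> > real R" using far by linarith
          then show "\<phi> (J * s - real_of_int k) = 0" using suppphi by force
        qed
      qed
      moreover have "indicator {a<..} s = (indicator {a<..a+\<delta>} s :: real)"
        using sE by (auto simp: indicator_def)
      moreover have "indicator E s = (1::real)" using True by simp
      ultimately show ?thesis by (simp add: sum_distrib_left[symmetric])
    next
      case False
      then have nE: "indicator E s = (0::real)" by simp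
      show ?thesis
      proof (cases "s > a")
        case True
        with False have sgt: "s > a + \<delta>" unfolding E_def by auto
        have "(\<Sum>k\<in>G. \<phi> (J * s - real_of_int k)) = 1"
        proof (rule PU[OF finG])
          fix k assume k: "\<bar>J * s - real_of_int k\<bar> \<le> real R"
          have "J * (a + \<delta>) < J * s" using sgt Jpos by simp
          then have "J * a + real R + 1 < J * s" using Jd by (simp add: algebra_simps)
          then have 1: "J * a < real_of_int k" using k by linarith
          have "J * s \<le> J * real A" using sA Jpos by (intro mult_left_mono) auto
          then have 2: "real_of_int k \<le> J * real A + real R + 1" using k by linarith
          show "k \<in> G" unfolding G_def using 1 2 by simp
        qed
        moreover have "indicator {a<..} s = (1::real)" using True by simp
        moreover have "indicator {a<..a+\<delta>} s = (0::real)" using sgt by simp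
        ultimately show ?thesis using nE by (simp add: sum_distrib_left[symmetric])
      next
        case le: False
        with False have slt: "s < a - \<delta>" unfolding E_def by auto
        have "\<phi> (J * s - real_of_int k) = 0" if "k \<in> G" for k
        proof (rule ccontr)
          assume "\<phi> (J * s - real_of_int k) \<noteq> 0"
          then have k: "\<bar>J * s - real_of_int k\<bar> \<le> real R" using suppphi by blast
          have "J * s < J * (a - \<delta>)" using slt Jpos by simp
          then have "J * s < J * a - real R - 1" using Jd by (simp add: algebra_simps)
          then have "real_of_int k < J * a" using k by linarith
          then show False using that unfolding G_def by simp
        qed
        then have "(\<Sum>k\<in>G. \<psi> s * \<phi> (J * s - real_of_int k)) = 0" by simp
        moreover have "indicator {a<..} s = (0::real)" using le by simp
        moreover have "indicator {a<..a+\<delta>} s = (0::real)" using le by simp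
        ultimately show ?thesis using nE by simp
      qed
    qed
  qed
  note [measurable] = phim psim
  define sJ where "sJ = sqrt J"
  have sJpos: "sJ > 0" unfolding sJ_def using Jpos by simp
  have sJsq: "sJ * sJ = J" unfolding sJ_def using Jpos by simp
  define t where "t = 1 / sJ"
  have tpos: "t > 0" unfolding t_def using sJpos by simp
  have Phinn: "\<Phi> \<ge> 0" unfolding \<Phi>_def by (rule integral_nonneg_AE) simp
  have gm: "(\<lambda>s. \<phi> (J * s - real_of_int k)) \<in> borel_measurable lborel" for k by measurable
  have g2: "integrable lborel (\<lambda>s. (\<phi> (J * s - real_of_int k))^2)" for k
    by (rule sq_affine(2)[OF Jpos phi2])
  have g2i: "(LINT s|lborel. (\<phi> (J * s - real_of_int k))^2) = \<Phi> / J" for k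
    unfolding \<Phi>_def by (rule sq_affine(1)[OF Jpos])
  have psim': "\<psi> \<in> borel_measurable lborel" by simp
  have fEm: "(\<lambda>s. \<psi> s * indicator E s) \<in> borel_measurable lborel" unfolding E_def by measurable
  have fEsq: "(\<lambda>s. (\<psi> s * indicator E s)^2) = (\<lambda>s. (\<psi> s)^2 * indicator E s)"
    by (auto simp: indicator_def fun_eq_iff)
  have fE2: "integrable lborel (\<lambda>s. (\<psi> s * indicator E s)^2)"
    unfolding fEsq by (rule integrable_real_mult_indicator) (auto simp: E_def intro: psi2)
  have fE2le: "(LINT s|lborel. (\<psi> s * indicator E s)^2) \<le> 1"
  proof -
    have "(LINT s|lborel. (\<psi> s * indicator E s)^2) \<le> (LINT s|lborel. (\<psi> s)^2)"
      by (rule integral_mono[OF fE2 psi2]) (auto simp: indicator_def)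
    then show ?thesis using psi21 by simp
  qed
  have im: "(\<lambda>s. indicator {a<..a+\<delta>} s :: real) \<in> borel_measurable lborel" by measurable
  have isq: "(\<lambda>s. (indicator {a<..a+\<delta>} s :: real)^2) = indicator {a<..a+\<delta>}"
    by (auto simp: indicator_def fun_eq_iff)
  have i2: "integrable lborel (\<lambda>s. (indicator {a<..a+\<delta>} s :: real)^2)"
    unfolding isq using dpos by (simp add: integrable_indicator_iff)
  have i2i: "(LINT s|lborel. (indicator {a<..a+\<delta>} s :: real)^2) = \<delta>"
    unfolding isq using dpos by simp
  have I1: "integrable lborel (\<lambda>s. \<psi> s * \<phi> (J * s - real_of_int k))" for k
    by (rule amgm_int(1)[OF psim' gm psi2 g2 tpos])
  have I2: "integrable lborel (\<lambda>s. \<psi> s * indicator {a<..a+\<delta>} s)"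
    by (rule amgm_int(1)[OF psim' im psi2 i2 tpos])
  have I3: "integrable lborel (\<lambda>s. (\<psi> s * indicator E s) * \<phi> (J * s - real_of_int k))" for k
    by (rule amgm_int(1)[OF fEm gm fE2 g2 tpos])
  define T1 where "T1 = (LINT s|lborel. \<psi> s * indicator {a<..a+\<delta>} s)"
  define T2 where "T2 k = (LINT s|lborel. (\<psi> s * indicator E s) * \<phi> (J * s - real_of_int k))" for k
  have "(LINT s|lborel. \<psi> s * indicator {a<..} s) =
      (LINT s|lborel. (\<Sum>k\<in>G. \<psi> s * \<phi> (J * s - real_of_int k)) + \<psi> s * indicator {a<..a+\<delta>} s
      - (\<Sum>k\<in>N. (\<psi> s * indicator E s) * \<phi> (J * s - real_of_int k)))"
    by (rule Bochner_Integration.integral_cong[OF refl]) (rule ident)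
  also have "\<dots> = (LINT s|lborel. (\<Sum>k\<in>G. \<psi> s * \<phi> (J * s - real_of_int k)) + \<psi> s * indicator {a<..a+\<delta>} s)
      - (LINT s|lborel. (\<Sum>k\<in>N. (\<psi> s * indicator E s) * \<phi> (J * s - real_of_int k)))"
    by (rule Bochner_Integration.integral_diff[where f="\<lambda>s. (\<Sum>k\<in>G. \<psi> s * \<phi> (J * s - real_of_int k)) + \<psi> s * indicator {a<..a+\<delta>} s"
        and g="\<lambda>s. (\<Sum>k\<in>N. (\<psi> s * indicator E s) * \<phi> (J * s - real_of_int k))"]) (use I1 I2 I3 in auto)
  also have "(LINT s|lborel. (\<Sum>k\<in>G. \<psi> s * \<phi> (J * s - real_of_int k)) + \<psi> s * indicator {a<..a+\<delta>} s)
      = (LINT s|lborel. (\<Sum>k\<in>G. \<psi> s * \<phi> (J * s - real_of_int k))) + T1"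
    unfolding T1_def by (rule Bochner_Integration.integral_add[where f="\<lambda>s. (\<Sum>k\<in>G. \<psi> s * \<phi> (J * s - real_of_int k))"
        and g="\<lambda>s. \<psi> s * indicator {a<..a+\<delta>} s"]) (use I1 I2 in auto)
  also have "(LINT s|lborel. (\<Sum>k\<in>G. \<psi> s * \<phi> (J * s - real_of_int k))) = (\<Sum>k\<in>G. LINT s|lborel. \<psi> s * \<phi> (J * s - real_of_int k))"
    using I1 by simp
  also have "\<dots> = 0" using orth by simp
  also have "(LINT s|lborel. (\<Sum>k\<in>N. (\<psi> s * indicator E s) * \<phi> (J * s - real_of_int k))) = (\<Sum>k\<in>N. T2 k)"
    unfolding T2_def using I3 by simp
  finally have main: "(LINT s|lborel. \<psi> s * indicator {a<..} s) = T1 - (\<Sum>k\<in>N. T2 k)" by simp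
  have bT1: "\<bar>T1\<bar> \<le> (real R + 2) / (2 * sJ)"
  proof -
    have "\<bar>T1\<bar> \<le> (t * 1 + \<delta> / t) / 2"
      using amgm_int(2)[OF psim' im psi2 i2 tpos] unfolding T1_def psi21 i2i by simp
    also have "\<dots> = (real R + 2) / (2 * sJ)"
      unfolding t_def \<delta>_def using sJpos by (simp add: sJsq[symmetric] field_simps)
    finally show ?thesis .
  qed
  have bT2: "\<bar>T2 k\<bar> \<le> (1 + \<Phi>) / (2 * sJ)" for k
  proof -
    have "\<bar>T2 k\<bar> \<le> (t * (LINT s|lborel. (\<psi> s * indicator E s)^2) + (\<Phi> / J) / t) / 2"
      using amgm_int(2)[OF fEm gm fE2 g2 tpos, of k] unfolding T2_def g2i by simp
    also have "\<dots> \<le> (t * 1 + (\<Phi> / J) / t) / 2"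
      using fE2le tpos by (simp add: divide_right_mono mult_left_mono)
    also have "\<dots> = (1 + \<Phi>) / (2 * sJ)"
      unfolding t_def using sJpos by (simp add: sJsq[symmetric] field_simps)
    finally show ?thesis .
  qed
  have "\<bar>\<Sum>k\<in>N. T2 k\<bar> \<le> (\<Sum>k\<in>N. \<bar>T2 k\<bar>)" by (rule sum_abs)
  also have "\<dots> \<le> (\<Sum>k\<in>N. (1 + \<Phi>) / (2 * sJ))" by (rule sum_mono) (rule bT2)
  also have "\<dots> = real (card N) * ((1 + \<Phi>) / (2 * sJ))" by simp
  also have "\<dots> \<le> (4 * real R + 3) * ((1 + \<Phi>) / (2 * sJ))"
  proof (rule mult_right_mono)
    show "real (card N) \<le> 4 * real R + 3" using cardN by linarith
    show "0 \<le> (1 + \<Phi>) / (2 * sJ)" using Phinn sJpos by simp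
  qed
  finally have bS: "\<bar>\<Sum>k\<in>N. T2 k\<bar> \<le> (4 * real R + 3) * ((1 + \<Phi>) / (2 * sJ))" .
  have "\<bar>LINT s|lborel. \<psi> s * indicator {a<..} s\<bar> \<le> \<bar>T1\<bar> + \<bar>\<Sum>k\<in>N. T2 k\<bar>"
    unfolding main by (rule abs_triangle_ineq4)
  also have "\<dots> \<le> (real R + 2) / (2 * sJ) + (4 * real R + 3) * ((1 + \<Phi>) / (2 * sJ))"
    using bT1 bS by linarith
  also have "\<dots> = ((real R + 2) + (4 * real R + 3) * (1 + \<Phi>)) / (2 * sqrt J)"
    unfolding sJ_def using Jpos by (simp add: field_simps)
  finally show ?thesis unfolding \<Phi>_def .
qed

theorem corollary4:
  fixes \<phi> \<psi> :: "real \<Rightarrow> real" and M :: nat and \<alpha> :: real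
  assumes L2: "L2 \<phi>" "L2 \<psi>"
    and W1: "compactly_supported \<phi>" "compactly_supported \<psi>"
            "integrable lborel \<phi>" "integrable lborel \<psi>"
            "fourier \<phi> 0 = 1" "(LINT t|lborel. (\<psi> t)\<^sup>2) = 1"
    and W2: "\<exists>C. \<forall>\<xi>. cmod (fourier \<psi> \<xi>) * (1 + \<bar>\<xi>\<bar>) powr \<alpha> \<le> C"
    and W3: "\<forall>m<M. (LINT t|lborel. t ^ m * \<psi> t) = 0"
    and W4: "\<forall>m<M. \<exists>p :: real poly. degree p = m \<and>
               (\<forall>t. (\<Sum>\<^sub>\<infinity>k\<in>(UNIV::int set). real_of_int k ^ m * \<phi> (t - real_of_int k)) = poly p t)"
    and M: "M \<ge> 1" and \<alpha>: "\<alpha> > 1"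
  shows "\<exists>j0::nat. \<forall>j\<ge>j0. \<exists>lam. Hpoly \<phi> \<psi> j lam \<noteq> 0"
proof (rule ccontr)
  assume neg: "\<not> (\<exists>j0::nat. \<forall>j\<ge>j0. \<exists>lam. Hpoly \<phi> \<psi> j lam \<noteq> 0)"
  then have bad: "\<And>j0. \<exists>j\<ge>j0. \<forall>lam. Hpoly \<phi> \<psi> j lam = 0" by auto
  have phim: "\<phi> \<in> borel_measurable borel" and phi2: "integrable lborel (\<lambda>x. (\<phi> x)^2)"
    using L2(1) unfolding L2_def by auto
  have psim: "\<psi> \<in> borel_measurable borel" and psi2: "integrable lborel (\<lambda>x. (\<psi> x)^2)"
    using L2(2) unfolding L2_def by auto
  obtain R :: nat where suppphi: "\<And>t. \<phi> t \<noteq> 0 \<Longrightarrow> \<bar>t\<bar> \<le> real R"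
    using supp_bound[OF W1(1)] by blast
  obtain A :: nat where supppsi: "\<And>t. \<psi> t \<noteq> 0 \<Longrightarrow> \<bar>t\<bar> \<le> real A"
    using supp_bound[OF W1(2)] by blast
  have "\<exists>p :: real poly. degree p = 0 \<and>
     (\<forall>t. (\<Sum>\<^sub>\<infinity>k\<in>(UNIV::int set). real_of_int k ^ 0 * \<phi> (t - real_of_int k)) = poly p t)"
  proof -
    have "0 < M" using M by simp
    then show ?thesis using W4 by blast
  qed
  from pu_const[OF this] obtain c where const: "\<And>t. (\<Sum>\<^sub>\<infinity>k\<in>(UNIV::int set). \<phi> (t - real_of_int k)) = c"
    by blast
  have int1: "(LINT t|lborel. \<phi> t) = 1"
  proof -
    have "fourier \<phi> 0 = complex_of_real (LINT t|lborel. \<phi> t)"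
      unfolding fourier_def by simp
    then show ?thesis using W1(5) by simp
  qed
  have c1: "c = 1"
    by (rule pu_one[OF _ W1(3) int1 suppphi const]) (use phim in simp)
  have PU: "\<And>t G. finite G \<Longrightarrow> (\<And>k. \<bar>t - real_of_int k\<bar> \<le> real R \<Longrightarrow> k \<in> G) \<Longrightarrow> (\<Sum>k\<in>G. \<phi> (t - real_of_int k)) = 1"
    using pu_sum[OF suppphi const] c1 by blast
  define K where "K = ((real R + 2) + (4 * real R + 3) * (1 + (LINT x|lborel. (\<phi> x)^2)))"
  have K0: "K \<ge> 0" unfolding K_def
    by (intro add_nonneg_nonneg mult_nonneg_nonneg) (auto intro!: integral_nonneg_AE)
  have halfz: "(LINT s|lborel. \<psi> s * indicator {a<..} s) = 0" for a
  proof (rule ccontr)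
    define x where "x = \<bar>LINT s|lborel. \<psi> s * indicator {a<..} s\<bar>"
    assume "(LINT s|lborel. \<psi> s * indicator {a<..} s) \<noteq> 0"
    then have xpos: "x > 0" unfolding x_def by simp
    obtain n :: nat where n: "(K / x)^2 < 2 ^ n"
      using real_arch_pow[of 2 "(K / x)^2"] by auto
    obtain j where j: "j \<ge> n" and H0: "\<And>lam. Hpoly \<phi> \<psi> j lam = 0" using bad by blast
    define J where "J = 2 powr real j"
    have J: "J \<ge> 1" unfolding J_def by (rule ge_one_powr_ge_zero) auto
    have Jn: "(2::real) ^ n \<le> J" unfolding J_def using j
      by (simp add: powr_realpow[symmetric])
    have orth: "(LINT s|lborel. \<psi> s * \<phi> (J * s - real_of_int k)) = 0" for k
      unfolding J_def
      by (rule rescale) (rule H_zero_imp_h_zero[OF suppphi supppsi H0])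
    have est: "x \<le> K / (2 * sqrt J)"
      unfolding x_def K_def
      by (rule main_est[OF phim psim psi2 W1(6) phi2 supppsi suppphi PU J orth])
    have "K / x < sqrt J"
    proof -
      have "K / x = sqrt ((K / x)^2)" using K0 xpos by simp
      also have "\<dots> < sqrt (2 ^ n)" by (rule real_sqrt_less_mono[OF n])
      also have "\<dots> \<le> sqrt J" using Jn by simp
      finally show ?thesis .
    qed
    then have "K < x * sqrt J" using xpos by (simp add: divide_less_eq mult.commute)
    moreover have "x * sqrt J \<le> x * (2 * sqrt J)" using xpos J by (intro mult_left_mono) auto
    ultimately have "K < x * (2 * sqrt J)" by linarith
    then have "K / (2 * sqrt J) < x" using J by (simp add: divide_less_eq)
    then show False using est by simp
  qed
  have "AE x in lborel. \<psi> x = 0"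
    by (rule zero_from_halflines[OF W1(4) halfz])
  then have "AE x in lborel. (\<psi> x)\<^sup>2 = 0" by (rule AE_mp) simp
  then have "(LINT t|lborel. (\<psi> t)\<^sup>2) = 0" by (rule integral_eq_zero_AE)
  then show False using W1(6) by simp
qed

end
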